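(* Let $m$ be a non-zero integer and $n$ any integer. Then \[ 25\sum_{k = 1}^n F_{mk}^{\,4} = \frac{F_{2mn+m}\left(L_{2mn + m} + 4( - 1)^{mn - 1} L_m \right)}{F_{2m}} + 6n+3\,. \]
   Context: $F_i$ and $L_i$ denote the Fibonacci and Lucas numbers, defined for all $i\in\mathbb{Z}$ by $F_i=F_{i-1}+F_{i-2}$, $F_0=0$, $F_1=1$, and $L_i=L_{i-1}+L_{i-2}$, $L_0=2$, $L_1=1$; equivalently $F_{-i}=(-1)^{i-1}F_i$ and $L_{-i}=(-1)^iL_i$. Summation convention for an arbitrary integer upper limit: $\sum_{k=a}^{a-1} f(k)=0$, and for $n<a-1$, $\sum_{k=a}^{n} f(k) = -\sum_{k=n+1}^{a-1} f(k)$. *)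

theory Defs
  imports Complex_Main
begin

fun fibn :: "nat \<Rightarrow> int" where
  "fibn 0 = 0"
| "fibn (Suc 0) = 1"
| "fibn (Suc (Suc n)) = fibn (Suc n) + fibn n"

fun lucn :: "nat \<Rightarrow> int" where
  "lucn 0 = 2"
| "lucn (Suc 0) = 1"
| "lucn (Suc (Suc n)) = lucn (Suc n) + lucn n"

definition F :: "int \<Rightarrow> int" where
  "F i = (if i \<ge> 0 then fibn (nat i) else (-1) ^ (nat (-i) - 1) * fibn (nat (-i)))"

definition L :: "int \<Rightarrow> int" where
  "L i = (if i \<ge> 0 then lucn (nat i) else (-1) ^ nat (-i) * lucn (nat (-i)))"

definition gsum :: "(int \<Rightarrow> 'a::ab_group_add) \<Rightarrow> int \<Rightarrow> int \<Rightarrow> 'a" where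
  "gsum f a n = (if n \<ge> a - 1 then sum f {a..n} else - sum f {n+1..a-1})"

end

theory Submission
  imports Defs
begin

lemma keyp:
  fixes a b A B s t :: real
  assumes "s*s=1" "A*B=t" "t*t=1"
  shows "(a*A*A - b*B*B)*(a*A*A + b*B*B - 4*t*(a+b)) - (s*b*A*A - s*a*B*B)*(s*b*A*A + s*a*B*B - 4*t*s*(a+b)) + 6*(a*a-b*b) = (A-B)^4*(a*a-b*b)"
proof -
  have e1: "(s*b*A*A - s*a*B*B)*(s*b*A*A + s*a*B*B - 4*t*s*(a+b)) = (b*A*A - a*B*B)*(b*A*A + a*B*B - 4*t*(a+b))"
  proof -
    have "(s*b*A*A - s*a*B*B)*(s*b*A*A + s*a*B*B - 4*t*s*(a+b)) = (s*s)*((b*A*A - a*B*B)*(b*A*A + a*B*B - 4*t*(a+b)))"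
      by (simp add: algebra_simps)
    then show ?thesis using assms by simp
  qed
  have e2: "(A-B)^4 = A^4+B^4 - 4*t*(A*A+B*B) + 6"
  proof -
    have "(A-B)^4 = A^4+B^4 - 4*(A*B)*(A*A+B*B) + 6*((A*B)*(A*B))"
      by (simp add: algebra_simps power4_eq_xxxx power2_eq_square)
    then show ?thesis using assms by simp
  qed
  show ?thesis unfolding e1 e2 using assms
    by (simp add: algebra_simps power4_eq_xxxx)
qed

definition phi :: real where "phi = (1 + sqrt 5)/2"
definition psi :: real where "psi = (1 - sqrt 5)/2"

lemma s5: "sqrt 5 * sqrt 5 = (5::real)" by simp
lemma phipsi: "phi * psi = -1"
  unfolding phi_def psi_def by (simp add: field_simps)
lemma phi_sq: "phi * phi = phi + 1"
  unfolding phi_def by (simp add: field_simps)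
lemma psi_sq: "psi * psi = psi + 1"
  unfolding psi_def by (simp add: field_simps)
lemma phi_nz: "phi \<noteq> 0" using phipsi by auto
lemma psi_nz: "psi \<noteq> 0" using phipsi by auto
lemma phi_minus_psi: "phi - psi = sqrt 5"
  unfolding phi_def psi_def by (simp add: field_simps)
lemma phi_plus_psi: "phi + psi = 1"
  unfolding phi_def psi_def by (simp add: field_simps)

lemma fibn_binet: "real_of_int (fibn n) = (phi^n - psi^n)/sqrt 5"
proof (induction n rule: fibn.induct)
  case 1 then show ?case by simp
next
  case 2 then show ?case using phi_minus_psi by simp
next
  case (3 n)
  have "phi^(Suc (Suc n)) = phi^n * (phi * phi)" by simp
  also have "\<dots> = phi^n * (phi + 1)" by (simp only: phi_sq)
  also have "\<dots> = phi^(Suc n) + phi^n" by (simp add: algebra_simps)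
  finally have P1: "phi^(Suc (Suc n)) = phi^(Suc n) + phi^n" .
  have "psi^(Suc (Suc n)) = psi^n * (psi * psi)" by simp
  also have "\<dots> = psi^n * (psi + 1)" by (simp only: psi_sq)
  also have "\<dots> = psi^(Suc n) + psi^n" by (simp add: algebra_simps)
  finally have P2: "psi^(Suc (Suc n)) = psi^(Suc n) + psi^n" .
  show ?case using 3 P1 P2 by (simp add: diff_divide_distrib add_divide_distrib)
qed

lemma lucn_binet: "real_of_int (lucn n) = phi^n + psi^n"
proof (induction n rule: lucn.induct)
  case 1 then show ?case by simp
next
  case 2 then show ?case using phi_plus_psi by simp
next
  case (3 n)
  have "phi^(Suc (Suc n)) = phi^n * (phi * phi)" by simp
  also have "\<dots> = phi^n * (phi + 1)" by (simp only: phi_sq)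
  also have "\<dots> = phi^(Suc n) + phi^n" by (simp add: algebra_simps)
  finally have P1: "phi^(Suc (Suc n)) = phi^(Suc n) + phi^n" .
  have "psi^(Suc (Suc n)) = psi^n * (psi * psi)" by simp
  also have "\<dots> = psi^n * (psi + 1)" by (simp only: psi_sq)
  also have "\<dots> = psi^(Suc n) + psi^n" by (simp add: algebra_simps)
  finally have P2: "psi^(Suc (Suc n)) = psi^(Suc n) + psi^n" .
  show ?case using 3 P1 P2 by simp
qed

lemma inv_phi: "inverse phi = - psi"
  using phipsi phi_nz by (simp add: field_simps)
lemma inv_psi: "inverse psi = - phi"
  using phipsi psi_nz by (simp add: field_simps)

lemma pos_pow: "0 \<le> i \<Longrightarrow> x powi i = (x::real) ^ nat i"
  by (metis power_int_of_nat nat_0_le)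

lemma neg_pow:
  assumes "i < 0"
  shows "phi powi i = (-1)^nat(-i) * psi^nat(-i)" "psi powi i = (-1)^nat(-i) * phi^nat(-i)"
proof -
  define k where "k = nat (-i)"
  have i: "i = - int k" using assms k_def by simp
  have "phi powi i = inverse (phi ^ k)"
    unfolding i by (simp add: power_int_minus)
  also have "\<dots> = (-psi) ^ k" by (simp only: power_inverse[symmetric] inv_phi)
  also have "\<dots> = (-1)^k * psi ^ k" by (rule power_minus)
  finally show "phi powi i = (-1)^nat(-i) * psi^nat(-i)" unfolding k_def[symmetric] .
  have "psi powi i = inverse (psi ^ k)"
    unfolding i by (simp add: power_int_minus)
  also have "\<dots> = (-phi) ^ k" by (simp only: power_inverse[symmetric] inv_psi)
  also have "\<dots> = (-1)^k * phi ^ k" by (rule power_minus)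
  finally show "psi powi i = (-1)^nat(-i) * phi^nat(-i)" unfolding k_def[symmetric] .
qed

lemma F_binet: "real_of_int (F i) = (phi powi i - psi powi i)/sqrt 5"
proof (cases "i \<ge> 0")
  case True
  then have i: "i = int (nat i)" by simp
  show ?thesis using True unfolding F_def by (simp add: fibn_binet pos_pow)
next
  case False
  define k where "k = nat (-i)"
  have k: "k \<ge> 1" using False k_def by simp
  have e: "((-1::real)^(k-1)) = - ((-1)^k)"
    using k by (cases k) auto
  have "real_of_int (F i) = (-1)^(k-1) * ((phi^k - psi^k)/sqrt 5)"
    using False by (simp add: F_def fibn_binet k_def)
  also have "\<dots> = ((-1)^k*psi^k - (-1)^k*phi^k)/sqrt 5"
    unfolding e by (simp add: algebra_simps diff_divide_distrib)
  also have "\<dots> = (phi powi i - psi powi i)/sqrt 5"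
    using False by (simp add: neg_pow k_def)
  finally show ?thesis .
qed

lemma L_binet: "real_of_int (L i) = phi powi i + psi powi i"
proof (cases "i \<ge> 0")
  case True
  then have i: "i = int (nat i)" by simp
  show ?thesis using True unfolding L_def by (simp add: lucn_binet pos_pow)
next
  case False
  then show ?thesis unfolding L_def by (simp add: neg_pow lucn_binet algebra_simps)
qed

lemma fibn_nonneg_aux: "fibn n \<ge> 0 \<and> fibn (Suc n) \<ge> 1"
  by (induction n) auto

lemma fibn_pos: "n \<ge> 1 \<Longrightarrow> fibn n > 0"
  using fibn_nonneg_aux[of "n-1"] by (cases n) auto

lemma F_nz: "i \<noteq> 0 \<Longrightarrow> F i \<noteq> 0"
proof -
  assume i: "i \<noteq> 0"
  show ?thesis
  proof (cases "i \<ge> 0")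
    case True
    then have "nat i \<ge> 1" using i by simp
    then show ?thesis using True fibn_pos[of "nat i"] unfolding F_def by simp
  next
    case False
    then have "nat (-i) \<ge> 1" by simp
    then show ?thesis using False fibn_pos[of "nat (-i)"] unfolding F_def by simp
  qed
qed

lemma gsum_step: "gsum f 1 n = gsum f 1 (n-1) + f n"
proof -
  consider "n \<ge> 1" | "n = 0" | "n < 0" by linarith
  then show ?thesis
  proof cases
    case 1
    then have "{1..n} = insert n {1..n-1}" by auto
    then show ?thesis using 1 unfolding gsum_def by simp
  next
    case 2
    then show ?thesis unfolding gsum_def by simp
  next
    case 3
    then have "{n..0} = insert n {n+1..0}" by auto
    then show ?thesis using 3 unfolding gsum_def by simp
  qed
qed

lemma p1: "(x::real) \<noteq> 0 \<Longrightarrow> x powi (2*m*n+m) = x powi m * (x powi (m*n) * x powi (m*n))"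
proof -
  assume x: "x \<noteq> 0"
  have "x powi (2*m*n+m) = x powi (m + (m*n + m*n))" by (rule arg_cong[where f="power_int x"]) simp
  also have "\<dots> = x powi m * (x powi (m*n) * x powi (m*n))" by (simp only: power_int_add[OF disjI1, OF x])
  finally show ?thesis .
qed

lemma p2: "(x::real) \<noteq> 0 \<Longrightarrow> x powi (2*m*(n-1)+m) = inverse (x powi m) * (x powi (m*n) * x powi (m*n))"
proof -
  assume x: "x \<noteq> 0"
  have "x powi (2*m*(n-1)+m) = x powi (-m + (m*n + m*n))" by (rule arg_cong[where f="power_int x"]) (simp add: algebra_simps)
  also have "\<dots> = inverse (x powi m) * (x powi (m*n) * x powi (m*n))" by (simp only: power_int_add[OF disjI1, OF x] power_int_minus)
  finally show ?thesis .
qed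

lemma p3: "(x::real) \<noteq> 0 \<Longrightarrow> x powi (2*m) = x powi m * x powi m"
proof -
  assume x: "x \<noteq> 0"
  have "x powi (2*m) = x powi (m + m)" by (rule arg_cong[where f="power_int x"]) simp
  also have "\<dots> = x powi m * x powi m" by (simp only: power_int_add[OF disjI1, OF x])
  finally show ?thesis .
qed

lemma m1: "(-1::real) powi (k - 1) = - ((-1) powi k)"
  by (simp add: power_int_diff)

lemma m2: "(-1::real) powi (m*(n-1) - 1) = - ((-1) powi (m*n) * (-1) powi m)"
proof -
  have x: "(-1::real) \<noteq> 0" by simp
  have "(-1::real) powi (m*(n-1) - 1) = (-1) powi ((m*n - 1) + (-m))"
    by (rule arg_cong[where f="power_int (-1)"]) (simp add: algebra_simps)
  also have "\<dots> = (-1) powi (m*n - 1) * inverse ((-1) powi m)"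
    by (simp only: power_int_add[OF disjI1, OF x] power_int_minus)
  also have "inverse ((-1::real) powi m) = (-1) powi m"
    by (simp add: power_int_inverse[symmetric])
  finally show ?thesis by (simp add: m1)
qed

lemma comb: "(D::real) \<noteq> 0 \<Longrightarrow> P - Q + 6*D = E*D \<Longrightarrow> P/D + x + 3 - (Q/D + x - 3) = E"
proof -
  assume D: "D \<noteq> 0" and h: "P - Q + 6*D = E*D"
  have "P/D + x + 3 - (Q/D + x - 3) = (P - Q + 6*D)/D" using D by (simp add: field_simps)
  then show ?thesis using h D by simp
qed

lemma divr: "(r::real) \<noteq> 0 \<Longrightarrow> (x/r) * y / (d/r) = x*y/d"
  by (cases "d=0") (simp_all add: field_simps)

theorem theorem1:
  fixes m n :: int
  assumes "m \<noteq> 0"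
  shows "25 * gsum (\<lambda>k. real_of_int (F (m * k)) ^ 4) 1 n =
    real_of_int (F (2*m*n + m)) *
      (real_of_int (L (2*m*n + m)) + 4 * (-1) powi (m*n - 1) * real_of_int (L m))
      / real_of_int (F (2*m)) + 6 * real_of_int n + 3"
proof -
  define r where "r = sqrt 5"
  have r0: "r \<noteq> 0" unfolding r_def by simp
  have r4: "r^4 = 25"
  proof -
    have "r^4 = (r*r)*(r*r)" by (simp add: power4_eq_xxxx)
    then show ?thesis unfolding r_def by simp
  qed
  define a where "a = phi powi m"
  define b where "b = psi powi m"
  define s where "s = a*b"
  have a0: "a \<noteq> 0" unfolding a_def using phi_nz by simp
  have b0: "b \<noteq> 0" unfolding b_def using psi_nz by simp
  have s_eq: "s = (-1) powi m" unfolding s_def a_def b_def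
    by (simp add: power_int_mult_distrib[symmetric] phipsi)
  have ss: "s*s = 1" unfolding s_eq by (simp add: power_int_mult_distrib[symmetric])
  have ia: "inverse a = s*b"
  proof -
    have "a*(s*b) = 1" using ss unfolding s_def by (simp add: algebra_simps)
    then show ?thesis by (simp add: inverse_unique)
  qed
  have ib: "inverse b = s*a"
  proof -
    have "b*(s*a) = 1" using ss unfolding s_def by (simp add: algebra_simps)
    then show ?thesis by (simp add: inverse_unique)
  qed
  have F2m: "real_of_int (F (2*m)) = (a*a - b*b)/r"
    unfolding F_binet r_def a_def b_def using p3 phi_nz psi_nz by simp
  have D0: "a*a - b*b \<noteq> 0"
  proof
    assume "a*a - b*b = 0"
    then have "real_of_int (F (2*m)) = 0" using F2m by simp
    then show False using F_nz[of "2*m"] assms by simp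
  qed
  have Lm: "real_of_int (L m) = a + b" unfolding L_binet a_def b_def by simp
  define R where "R n = real_of_int (F (2*m*n + m)) *
      (real_of_int (L (2*m*n + m)) + 4 * (-1) powi (m*n - 1) * real_of_int (L m))
      / real_of_int (F (2*m)) + 6 * real_of_int n + 3" for n
  define f where "f k = real_of_int (F (m * k)) ^ 4" for k
  have step: "R n - R (n-1) = 25 * f n" for n
  proof -
    define A where "A = phi powi (m*n)"
    define B where "B = psi powi (m*n)"
    define t where "t = A*B"
    have t_eq: "t = (-1) powi (m*n)" unfolding t_def A_def B_def
      by (simp add: power_int_mult_distrib[symmetric] phipsi)
    have tt: "t*t = 1" unfolding t_eq by (simp add: power_int_mult_distrib[symmetric])
    have e1: "real_of_int (F (2*m*n + m)) = (a*A*A - b*B*B)/r"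
      unfolding F_binet r_def a_def b_def A_def B_def using p1 phi_nz psi_nz by (simp add: mult.assoc)
    have e2: "real_of_int (L (2*m*n + m)) = a*A*A + b*B*B"
      unfolding L_binet a_def b_def A_def B_def using p1 phi_nz psi_nz by (simp add: mult.assoc)
    have e3: "(-1::real) powi (m*n - 1) = - t" unfolding t_eq by (rule m1)
    have e4: "real_of_int (F (2*m*(n-1) + m)) = (s*b*A*A - s*a*B*B)/r"
      using p2[OF phi_nz, of m n] p2[OF psi_nz, of m n] unfolding F_binet r_def
      by (simp add: a_def[symmetric] b_def[symmetric] A_def[symmetric] B_def[symmetric] ia ib mult.assoc)
    have e5: "real_of_int (L (2*m*(n-1) + m)) = s*b*A*A + s*a*B*B"
      using p2[OF phi_nz, of m n] p2[OF psi_nz, of m n] unfolding L_binet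
      by (simp add: a_def[symmetric] b_def[symmetric] A_def[symmetric] B_def[symmetric] ia ib mult.assoc)
    have e6: "(-1::real) powi (m*(n-1) - 1) = - (t*s)" unfolding t_eq s_eq by (rule m2)
    have e7: "real_of_int (F (m*n)) = (A - B)/r" unfolding F_binet A_def B_def r_def by simp
    have Rn: "R n = (a*A*A - b*B*B)*(a*A*A + b*B*B - 4*t*(a+b))/(a*a-b*b) + 6*n + 3"
      unfolding R_def e1 e2 e3 Lm F2m divr[OF r0] by (simp add: algebra_simps)
    have Rn1: "R (n-1) = (s*b*A*A - s*a*B*B)*(s*b*A*A + s*a*B*B - 4*t*s*(a+b))/(a*a-b*b) + 6*n - 3"
      unfolding R_def e4 e5 e6 Lm F2m divr[OF r0] by (simp add: algebra_simps)
    have fn: "25 * f n = (A-B)^4"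
      unfolding f_def e7 using r4 r0 by (simp add: power_divide)
    have K: "(a*A*A - b*B*B)*(a*A*A + b*B*B - 4*t*(a+b)) - (s*b*A*A - s*a*B*B)*(s*b*A*A + s*a*B*B - 4*t*s*(a+b)) + 6*(a*a-b*b) = (A-B)^4*(a*a-b*b)"
      by (rule keyp[OF ss t_def[symmetric] tt])
    show ?thesis unfolding Rn Rn1 fn by (rule comb[OF D0 K])
  qed
  have R0: "R 0 = 0"
  proof -
    have "R 0 = ((a - b)/r) * ((a+b) - 4*(a+b)) / ((a*a-b*b)/r) + 3"
      unfolding R_def F2m Lm by (simp add: F_binet L_binet a_def b_def r_def)
    also have "\<dots> = 0" using r0 D0 by (simp add: field_simps)
    finally show ?thesis .
  qed
  have gs: "gsum f 1 k = gsum f 1 (k-1) + f k" for k by (rule gsum_step)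
  have g0: "gsum f 1 0 = 0" unfolding gsum_def by simp
  define G where "G k = 25 * gsum f 1 k - R k" for k
  have G0: "G 0 = 0" unfolding G_def g0 R0 by simp
  have Gs: "G k = G (k-1)" for k using gs[of k] step[of k] unfolding G_def by (simp add: algebra_simps)
  have "G n = 0"
  proof (induction n rule: int_induct[where k=0])
    case base then show ?case by (rule G0)
  next
    case (step1 i) then show ?case using Gs[of "i+1"] by simp
  next
    case (step2 i) then show ?case using Gs[of i] by simp
  qed
  then show ?thesis unfolding G_def R_def f_def by simp
qed

end
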